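(* Let $G$ be a countable group with a subgroup $\Gamma$ of index $m$ and a subgroup $H\lhd\Gamma$ of cardinality $d$ such that $\Gamma/H$ is abelian. Then for every finitely additive left-invariant mean $\mu$ on $G$ we have $\textup{dc}_\mu(G)\ge\frac{1}{m^2d}$. Moreover, if $G$ is finitely generated and $M$ is a sequence of probability measures on $G$ that measures index uniformly then $\textup{dc}_M(G)\ge\frac{1}{m^2d}$.
   Context: A finitely additive left-invariant mean is a positive normalised linear functional $\int\cdot\,d\mu$ on $\ell^\infty(G)$ invariant under $f\mapsto f(g^{-1}\cdot)$; $\mu(X)=\int1_X\,d\mu$; product mean $\int f\,d(\mu\times\mu)=\int_x\int_y f(x,y)\,d\mu(x)\,d\mu(y)$; $\textup{dc}_\mu(G)=(\mu\times\mu)(\{(x,y):xy=yx\})$. A sequence $M=(\mu_n)$ of probability measures measures index uniformly if $\mu_n(xH)\to1/[G:H]$ uniformly over $x\in G$ and subgroups $H$ (with $1/[G:H]=0$ for infinite index), and $\textup{dc}_M(G)=\limsup_n\textup{dc}_{\mu_n}(G)$ where $\textup{dc}_{\mu_n}(G)=(\mu_n\times\mu_n)(\{(x,y):xy=yx\})$. *)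

theory Defs
  imports "HOL-Analysis.Analysis" "HOL-Algebra.Algebra" "HOL-Probability.Probability"
begin

text \<open>Index [G:H] as a natural number; it is 0 when the index is infinite, so
  that inverse (real (group_index G H)) = 1/[G:H] with the convention 1/infinity = 0.\<close>
definition group_index :: "('a, 'b) monoid_scheme \<Rightarrow> 'a set \<Rightarrow> nat" where
  "group_index G H = card (rcosets\<^bsub>G\<^esub> H)"

definition bounded_on :: "'a set \<Rightarrow> ('a \<Rightarrow> real) \<Rightarrow> bool" where
  "bounded_on S f \<longleftrightarrow> (\<exists>B. \<forall>x\<in>S. \<bar>f x\<bar> \<le> B)"

definition left_inv_mean :: "('a, 'b) monoid_scheme \<Rightarrow> (('a \<Rightarrow> real) \<Rightarrow> real) \<Rightarrow> bool" where
  "left_inv_mean G \<mu> \<longleftrightarrow>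
     (\<forall>f g. bounded_on (carrier G) f \<and> bounded_on (carrier G) g \<longrightarrow>
        \<mu> (\<lambda>x. f x + g x) = \<mu> f + \<mu> g) \<and>
     (\<forall>c f. bounded_on (carrier G) f \<longrightarrow> \<mu> (\<lambda>x. c * f x) = c * \<mu> f) \<and>
     (\<forall>f. bounded_on (carrier G) f \<and> (\<forall>x\<in>carrier G. 0 \<le> f x) \<longrightarrow> 0 \<le> \<mu> f) \<and>
     (\<forall>f g. (\<forall>x\<in>carrier G. f x = g x) \<longrightarrow> \<mu> f = \<mu> g) \<and>
     \<mu> (\<lambda>x. 1) = 1 \<and>
     (\<forall>g\<in>carrier G. \<forall>f. bounded_on (carrier G) f \<longrightarrow>
        \<mu> (\<lambda>x. f (inv\<^bsub>G\<^esub> g \<otimes>\<^bsub>G\<^esub> x)) = \<mu> f)"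

text \<open>dc_mu(G) = (mu x mu)({(x,y). xy = yx}), the product mean being the iterated mean.\<close>
definition dc_mean :: "('a, 'b) monoid_scheme \<Rightarrow> (('a \<Rightarrow> real) \<Rightarrow> real) \<Rightarrow> real" where
  "dc_mean G \<mu> = \<mu> (\<lambda>x. \<mu> (\<lambda>y. if x \<otimes>\<^bsub>G\<^esub> y = y \<otimes>\<^bsub>G\<^esub> x then 1 else 0))"

definition dc_pmf :: "('a, 'b) monoid_scheme \<Rightarrow> 'a pmf \<Rightarrow> real" where
  "dc_pmf G p = measure_pmf.prob (pair_pmf p p) {(x, y). x \<otimes>\<^bsub>G\<^esub> y = y \<otimes>\<^bsub>G\<^esub> x}"

definition measures_index_uniformly :: "('a, 'b) monoid_scheme \<Rightarrow> (nat \<Rightarrow> 'a pmf) \<Rightarrow> bool" where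
  "measures_index_uniformly G M \<longleftrightarrow>
     (\<forall>n. set_pmf (M n) \<subseteq> carrier G) \<and>
     (\<forall>\<epsilon>>0. \<exists>N. \<forall>n\<ge>N. \<forall>H. subgroup H G \<longrightarrow> (\<forall>x\<in>carrier G.
        \<bar>measure_pmf.prob (M n) (x <#\<^bsub>G\<^esub> H) - inverse (real (group_index G H))\<bar> < \<epsilon>))"

definition dc_seq :: "('a, 'b) monoid_scheme \<Rightarrow> (nat \<Rightarrow> 'a pmf) \<Rightarrow> ereal" where
  "dc_seq G M = limsup (\<lambda>n. ereal (dc_pmf G (M n)))"

definition finitely_generated_group :: "('a, 'b) monoid_scheme \<Rightarrow> bool" where
  "finitely_generated_group G \<longleftrightarrow> (\<exists>S. finite S \<and> S \<subseteq> carrier G \<and> generate G S = carrier G)"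

end

theory Submission
  imports Defs
begin

lemma comm_in_H:
  assumes G: "group G" and S: "subgroup \<Gamma> G" and N: "H \<lhd> G\<lparr>carrier := \<Gamma>\<rparr>"
    and C: "comm_group (G\<lparr>carrier := \<Gamma>\<rparr> Mod H)"
    and x: "x \<in> \<Gamma>" and g: "g \<in> \<Gamma>"
  shows "x \<otimes>\<^bsub>G\<^esub> g \<otimes>\<^bsub>G\<^esub> inv\<^bsub>G\<^esub> x \<otimes>\<^bsub>G\<^esub> inv\<^bsub>G\<^esub> g \<in> H"
proof -
  interpret G: group G by fact
  let ?T = "G\<lparr>carrier := \<Gamma>\<rparr>"
  interpret T: group ?T using subgroup.subgroup_is_group[OF S G] .
  interpret N: normal H ?T by fact
  interpret C: comm_group "?T Mod H" by fact
  have xc: "H #>\<^bsub>?T\<^esub> x \<in> carrier (?T Mod H)" "H #>\<^bsub>?T\<^esub> g \<in> carrier (?T Mod H)"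
    using x g by (auto simp: FactGroup_def RCOSETS_def)
  have "(H #>\<^bsub>?T\<^esub> x) <#>\<^bsub>?T\<^esub> (H #>\<^bsub>?T\<^esub> g) = (H #>\<^bsub>?T\<^esub> g) <#>\<^bsub>?T\<^esub> (H #>\<^bsub>?T\<^esub> x)"
    using C.m_comm[OF xc] by simp
  hence eq: "H #>\<^bsub>?T\<^esub> (x \<otimes>\<^bsub>G\<^esub> g) = H #>\<^bsub>?T\<^esub> (g \<otimes>\<^bsub>G\<^esub> x)"
    using N.rcos_sum x g by simp
  have "x \<otimes>\<^bsub>G\<^esub> g \<in> H #>\<^bsub>?T\<^esub> (g \<otimes>\<^bsub>G\<^esub> x)"
    using eq T.rcos_self[of "x \<otimes>\<^bsub>G\<^esub> g" H] x g N.subgroup_axioms subgroup.m_closed[OF S x g] by simp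
  then obtain h where h: "h \<in> H" "x \<otimes>\<^bsub>G\<^esub> g = h \<otimes>\<^bsub>G\<^esub> (g \<otimes>\<^bsub>G\<^esub> x)"
    unfolding r_coset_def by auto
  have Hs: "H \<subseteq> carrier G" using N.subset subgroup.subset[OF S] by auto
  have xg: "x \<in> carrier G" "g \<in> carrier G" using x g subgroup.subset[OF S] by auto
  have hc: "h \<in> carrier G" using h Hs by auto
  have "x \<otimes>\<^bsub>G\<^esub> g \<otimes>\<^bsub>G\<^esub> inv\<^bsub>G\<^esub> x \<otimes>\<^bsub>G\<^esub> inv\<^bsub>G\<^esub> g = h"
    using h(2) xg hc by (simp add: G.m_assoc G.inv_mult_group[symmetric])
  thus ?thesis using h by simp
qed

lemma cent_subgroup:
  assumes G: "group G" and S: "subgroup \<Gamma> G" and x: "x \<in> carrier G"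
  shows "subgroup {y\<in>\<Gamma>. x \<otimes>\<^bsub>G\<^esub> y = y \<otimes>\<^bsub>G\<^esub> x} G"
proof -
  interpret G: group G by fact
  have sub: "\<Gamma> \<subseteq> carrier G" using subgroup.subset[OF S] .
  show ?thesis
  proof (rule G.subgroupI)
    show "{y \<in> \<Gamma>. x \<otimes>\<^bsub>G\<^esub> y = y \<otimes>\<^bsub>G\<^esub> x} \<subseteq> carrier G" using sub by auto
    show "{y \<in> \<Gamma>. x \<otimes>\<^bsub>G\<^esub> y = y \<otimes>\<^bsub>G\<^esub> x} \<noteq> {}"
      using subgroup.one_closed[OF S] x by auto
  next
    fix a assume a: "a \<in> {y \<in> \<Gamma>. x \<otimes>\<^bsub>G\<^esub> y = y \<otimes>\<^bsub>G\<^esub> x}"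
    hence ac: "a \<in> carrier G" "a \<in> \<Gamma>" and e: "x \<otimes>\<^bsub>G\<^esub> a = a \<otimes>\<^bsub>G\<^esub> x" using sub by auto
    have "inv\<^bsub>G\<^esub> a \<otimes>\<^bsub>G\<^esub> x = inv\<^bsub>G\<^esub> a \<otimes>\<^bsub>G\<^esub> (x \<otimes>\<^bsub>G\<^esub> a) \<otimes>\<^bsub>G\<^esub> inv\<^bsub>G\<^esub> a"
      using ac x by (simp add: G.m_assoc)
    also have "\<dots> = x \<otimes>\<^bsub>G\<^esub> inv\<^bsub>G\<^esub> a" using e ac x by (simp add: G.m_assoc[symmetric])
    finally show "inv\<^bsub>G\<^esub> a \<in> {y \<in> \<Gamma>. x \<otimes>\<^bsub>G\<^esub> y = y \<otimes>\<^bsub>G\<^esub> x}"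
      using subgroup.m_inv_closed[OF S ac(2)] by auto
  next
    fix a b assume a: "a \<in> {y \<in> \<Gamma>. x \<otimes>\<^bsub>G\<^esub> y = y \<otimes>\<^bsub>G\<^esub> x}" "b \<in> {y \<in> \<Gamma>. x \<otimes>\<^bsub>G\<^esub> y = y \<otimes>\<^bsub>G\<^esub> x}"
    hence ac: "a \<in> carrier G" "b \<in> carrier G" "a \<in> \<Gamma>" "b \<in> \<Gamma>"
      and e: "x \<otimes>\<^bsub>G\<^esub> a = a \<otimes>\<^bsub>G\<^esub> x" "x \<otimes>\<^bsub>G\<^esub> b = b \<otimes>\<^bsub>G\<^esub> x" using sub by auto
    have "x \<otimes>\<^bsub>G\<^esub> (a \<otimes>\<^bsub>G\<^esub> b) = a \<otimes>\<^bsub>G\<^esub> (x \<otimes>\<^bsub>G\<^esub> b)"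
      by (metis G.m_assoc e(1) ac(1,2) x)
    also have "\<dots> = a \<otimes>\<^bsub>G\<^esub> b \<otimes>\<^bsub>G\<^esub> x" by (metis G.m_assoc e(2) ac(1,2) x)
    finally show "a \<otimes>\<^bsub>G\<^esub> b \<in> {y \<in> \<Gamma>. x \<otimes>\<^bsub>G\<^esub> y = y \<otimes>\<^bsub>G\<^esub> x}"
      using subgroup.m_closed[OF S ac(3,4)] by auto
  qed
qed


lemma cent_index:
  assumes G: "group G" and S: "subgroup \<Gamma> G" and N: "H \<lhd> G\<lparr>carrier := \<Gamma>\<rparr>"
    and C: "comm_group (G\<lparr>carrier := \<Gamma>\<rparr> Mod H)"
    and finH: "finite H" and finR: "finite (rcosets\<^bsub>G\<^esub> \<Gamma>)" and x: "x \<in> \<Gamma>"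
  shows "finite (rcosets\<^bsub>G\<^esub> {y\<in>\<Gamma>. x \<otimes>\<^bsub>G\<^esub> y = y \<otimes>\<^bsub>G\<^esub> x})
     \<and> card (rcosets\<^bsub>G\<^esub> {y\<in>\<Gamma>. x \<otimes>\<^bsub>G\<^esub> y = y \<otimes>\<^bsub>G\<^esub> x}) \<le> card (rcosets\<^bsub>G\<^esub> \<Gamma>) * card H"
proof -
  interpret G: group G by fact
  define K where "K = {y\<in>\<Gamma>. x \<otimes>\<^bsub>G\<^esub> y = y \<otimes>\<^bsub>G\<^esub> x}"
  have sub: "\<Gamma> \<subseteq> carrier G" using subgroup.subset[OF S] .
  have xc: "x \<in> carrier G" using x sub by auto
  have KS: "subgroup K G" unfolding K_def using cent_subgroup[OF G S xc] .
  have Hs: "H \<subseteq> carrier G"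
    using subgroup.subset[OF normal.axioms(1)[OF N]] sub by simp
  define rep where "rep c = (SOME a. a \<in> c)" for c :: "'a set"
  define F where "F p = K #>\<^bsub>G\<^esub> ((SOME g. g \<in> \<Gamma> \<and> inv\<^bsub>G\<^esub> g \<otimes>\<^bsub>G\<^esub> x \<otimes>\<^bsub>G\<^esub> g = snd p) \<otimes>\<^bsub>G\<^esub> rep (fst p))"
    for p :: "'a set \<times> 'a"
  have incl: "rcosets\<^bsub>G\<^esub> K \<subseteq> F ` ((rcosets\<^bsub>G\<^esub> \<Gamma>) \<times> (x <#\<^bsub>G\<^esub> H))"
  proof
    fix c assume "c \<in> rcosets\<^bsub>G\<^esub> K"
    then obtain y where y: "y \<in> carrier G" and cy: "c = K #>\<^bsub>G\<^esub> y" unfolding RCOSETS_def by auto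
    define cc where "cc = \<Gamma> #>\<^bsub>G\<^esub> y"
    have ccR: "cc \<in> rcosets\<^bsub>G\<^esub> \<Gamma>" unfolding cc_def using G.rcosetsI[OF sub y] .
    have "y \<in> cc" unfolding cc_def using G.rcos_self[OF y S] .
    hence a: "rep cc \<in> cc" unfolding rep_def by (rule someI)
    define a where "a = rep cc"
    have ac: "a \<in> carrier G" using a a_def cc_def G.r_coset_subset_G[OF sub y] by auto
    have "a \<otimes>\<^bsub>G\<^esub> inv\<^bsub>G\<^esub> y \<in> \<Gamma>"
      using subgroup.rcos_module_imp[OF S G y] a a_def cc_def by auto
    hence "inv\<^bsub>G\<^esub> (a \<otimes>\<^bsub>G\<^esub> inv\<^bsub>G\<^esub> y) \<in> \<Gamma>" using subgroup.m_inv_closed[OF S] by auto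
    hence gG: "y \<otimes>\<^bsub>G\<^esub> inv\<^bsub>G\<^esub> a \<in> \<Gamma>" using ac y by (simp add: G.inv_mult_group)
    define g where "g = y \<otimes>\<^bsub>G\<^esub> inv\<^bsub>G\<^esub> a"
    have gc: "g \<in> carrier G" using gG g_def sub by auto
    define h where "h = inv\<^bsub>G\<^esub> g \<otimes>\<^bsub>G\<^esub> x \<otimes>\<^bsub>G\<^esub> g"
    have "inv\<^bsub>G\<^esub> x \<otimes>\<^bsub>G\<^esub> inv\<^bsub>G\<^esub> g \<otimes>\<^bsub>G\<^esub> inv\<^bsub>G\<^esub> (inv\<^bsub>G\<^esub> x) \<otimes>\<^bsub>G\<^esub> inv\<^bsub>G\<^esub> (inv\<^bsub>G\<^esub> g) \<in> H"
      using comm_in_H[OF G S N C] subgroup.m_inv_closed[OF S] x gG g_def by auto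
    hence hh: "inv\<^bsub>G\<^esub> x \<otimes>\<^bsub>G\<^esub> inv\<^bsub>G\<^esub> g \<otimes>\<^bsub>G\<^esub> x \<otimes>\<^bsub>G\<^esub> g \<in> H" using xc gc by simp
    have "h = x \<otimes>\<^bsub>G\<^esub> (inv\<^bsub>G\<^esub> x \<otimes>\<^bsub>G\<^esub> inv\<^bsub>G\<^esub> g \<otimes>\<^bsub>G\<^esub> x \<otimes>\<^bsub>G\<^esub> g)"
      unfolding h_def using xc gc by (simp add: G.m_assoc[symmetric])
    hence hH: "h \<in> x <#\<^bsub>G\<^esub> H" using hh unfolding l_coset_def by auto
    have ex: "\<exists>g'. g' \<in> \<Gamma> \<and> inv\<^bsub>G\<^esub> g' \<otimes>\<^bsub>G\<^esub> x \<otimes>\<^bsub>G\<^esub> g' = h"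
      using gG g_def h_def by auto
    define g' where "g' = (SOME g'. g' \<in> \<Gamma> \<and> inv\<^bsub>G\<^esub> g' \<otimes>\<^bsub>G\<^esub> x \<otimes>\<^bsub>G\<^esub> g' = h)"
    have g': "g' \<in> \<Gamma>" "inv\<^bsub>G\<^esub> g' \<otimes>\<^bsub>G\<^esub> x \<otimes>\<^bsub>G\<^esub> g' = h"
      using someI_ex[OF ex] unfolding g'_def by auto
    have g'c: "g' \<in> carrier G" using g' sub by auto
    have Fe: "F (cc, h) = K #>\<^bsub>G\<^esub> (g' \<otimes>\<^bsub>G\<^esub> a)"
      unfolding F_def g'_def a_def by simp
    have e1: "g \<otimes>\<^bsub>G\<^esub> (inv\<^bsub>G\<^esub> g' \<otimes>\<^bsub>G\<^esub> x \<otimes>\<^bsub>G\<^esub> g') \<otimes>\<^bsub>G\<^esub> inv\<^bsub>G\<^esub> g' = g \<otimes>\<^bsub>G\<^esub> inv\<^bsub>G\<^esub> g' \<otimes>\<^bsub>G\<^esub> x"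
      using gc g'c xc by (simp add: G.m_assoc)
    have e2: "g \<otimes>\<^bsub>G\<^esub> (inv\<^bsub>G\<^esub> g \<otimes>\<^bsub>G\<^esub> x \<otimes>\<^bsub>G\<^esub> g) \<otimes>\<^bsub>G\<^esub> inv\<^bsub>G\<^esub> g' = x \<otimes>\<^bsub>G\<^esub> (g \<otimes>\<^bsub>G\<^esub> inv\<^bsub>G\<^esub> g')"
      using gc g'c xc by (simp add: G.m_assoc[symmetric])
    have gK: "g \<otimes>\<^bsub>G\<^esub> inv\<^bsub>G\<^esub> g' \<in> K"
      unfolding K_def using e1 e2 g'(2) h_def subgroup.m_closed[OF S gG[folded g_def] subgroup.m_inv_closed[OF S g'(1)]]
      by auto
    have "y \<otimes>\<^bsub>G\<^esub> inv\<^bsub>G\<^esub> (g' \<otimes>\<^bsub>G\<^esub> a) = g \<otimes>\<^bsub>G\<^esub> inv\<^bsub>G\<^esub> g'"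
      unfolding g_def using y ac g'c by (simp add: G.inv_mult_group G.m_assoc)
    hence "y \<in> K #>\<^bsub>G\<^esub> (g' \<otimes>\<^bsub>G\<^esub> a)"
      using subgroup.rcos_module_rev[OF KS G _ y] gK g'c ac by auto
    hence "K #>\<^bsub>G\<^esub> (g' \<otimes>\<^bsub>G\<^esub> a) = K #>\<^bsub>G\<^esub> y"
      using G.repr_independence[OF _ _ KS] g'c ac by auto
    thus "c \<in> F ` ((rcosets\<^bsub>G\<^esub> \<Gamma>) \<times> (x <#\<^bsub>G\<^esub> H))"
      using Fe cy ccR hH by (metis SigmaI image_eqI)
  qed
  have lH: "x <#\<^bsub>G\<^esub> H = (\<lambda>h. x \<otimes>\<^bsub>G\<^esub> h) ` H" unfolding l_coset_def by auto
  have finP: "finite ((rcosets\<^bsub>G\<^esub> \<Gamma>) \<times> (x <#\<^bsub>G\<^esub> H))" using finR finH lH by auto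
  have "card (rcosets\<^bsub>G\<^esub> K) \<le> card (F ` ((rcosets\<^bsub>G\<^esub> \<Gamma>) \<times> (x <#\<^bsub>G\<^esub> H)))"
    using incl finP by (simp add: card_mono)
  also have "\<dots> \<le> card ((rcosets\<^bsub>G\<^esub> \<Gamma>) \<times> (x <#\<^bsub>G\<^esub> H))" using card_image_le finP by blast
  also have "\<dots> = card (rcosets\<^bsub>G\<^esub> \<Gamma>) * card (x <#\<^bsub>G\<^esub> H)" by (simp add: card_cartesian_product)
  also have "\<dots> \<le> card (rcosets\<^bsub>G\<^esub> \<Gamma>) * card H"
    using lH card_image_le[OF finH, of "\<lambda>h. x \<otimes>\<^bsub>G\<^esub> h"] by (simp add: mult_le_mono2)
  finally have "card (rcosets\<^bsub>G\<^esub> K) \<le> card (rcosets\<^bsub>G\<^esub> \<Gamma>) * card H" .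
  moreover have "finite (rcosets\<^bsub>G\<^esub> K)" using incl finP finite_subset finite_imageI by blast
  ultimately show ?thesis using K_def by auto
qed


lemma bounded_ind: "bounded_on S (\<lambda>y. if P y then (1::real) else 0)"
  unfolding bounded_on_def by (rule exI[of _ 1]) auto

lemma bounded_const: "bounded_on S (\<lambda>y. c)"
  unfolding bounded_on_def by (rule exI[of _ "\<bar>c\<bar>"]) auto

lemma bounded_add: "bounded_on S f \<Longrightarrow> bounded_on S g \<Longrightarrow> bounded_on S (\<lambda>x. f x + g x)"
  unfolding bounded_on_def
proof (elim exE)
  fix A B assume "\<forall>x\<in>S. \<bar>f x\<bar> \<le> A" "\<forall>x\<in>S. \<bar>g x\<bar> \<le> B"
  then show "\<exists>C. \<forall>x\<in>S. \<bar>f x + g x\<bar> \<le> C" by (intro exI[of _ "A+B"]) force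
qed

lemma bounded_diff: "bounded_on S f \<Longrightarrow> bounded_on S g \<Longrightarrow> bounded_on S (\<lambda>x. g x - f x)"
  unfolding bounded_on_def
proof (elim exE)
  fix A B assume "\<forall>x\<in>S. \<bar>f x\<bar> \<le> A" "\<forall>x\<in>S. \<bar>g x\<bar> \<le> B"
  then show "\<exists>C. \<forall>x\<in>S. \<bar>g x - f x\<bar> \<le> C" by (intro exI[of _ "A+B"]) force
qed

lemma bounded_sum: "finite A \<Longrightarrow> (\<And>a. a \<in> A \<Longrightarrow> bounded_on S (f a)) \<Longrightarrow> bounded_on S (\<lambda>x. \<Sum>a\<in>A. f a x)"
  by (induction A rule: finite_induct) (auto intro: bounded_add bounded_const)

lemma mean_scale:
  assumes "left_inv_mean G \<mu>" "bounded_on (carrier G) f"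
  shows "\<mu> (\<lambda>x. c * f x) = c * \<mu> f"
proof -
  have "\<forall>c f. bounded_on (carrier G) f \<longrightarrow> \<mu> (\<lambda>x. c * f x) = c * \<mu> f"
    using assms(1) unfolding left_inv_mean_def by (elim conjE) assumption
  hence "bounded_on (carrier G) f \<longrightarrow> \<mu> (\<lambda>x. c * f x) = c * \<mu> f" by (elim allE)
  thus ?thesis using assms(2) by (rule mp)
qed

lemma mean_add:
  assumes "left_inv_mean G \<mu>" "bounded_on (carrier G) f" "bounded_on (carrier G) g"
  shows "\<mu> (\<lambda>x. f x + g x) = \<mu> f + \<mu> g"
proof -
  have "\<forall>f g. bounded_on (carrier G) f \<and> bounded_on (carrier G) g \<longrightarrow>
        \<mu> (\<lambda>x. f x + g x) = \<mu> f + \<mu> g"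
    using assms(1) unfolding left_inv_mean_def by (elim conjE) assumption
  hence "bounded_on (carrier G) f \<and> bounded_on (carrier G) g \<longrightarrow> \<mu> (\<lambda>x. f x + g x) = \<mu> f + \<mu> g"
    by (elim allE)
  thus ?thesis using assms(2,3) by simp
qed

lemma mean_one: "left_inv_mean G \<mu> \<Longrightarrow> \<mu> (\<lambda>x. 1) = 1"
  unfolding left_inv_mean_def by (elim conjE) assumption

lemma mean_pos:
  assumes "left_inv_mean G \<mu>" "bounded_on (carrier G) f" "\<And>x. x \<in> carrier G \<Longrightarrow> 0 \<le> f x"
  shows "0 \<le> \<mu> f"
proof -
  have "\<forall>f. bounded_on (carrier G) f \<and> (\<forall>x\<in>carrier G. 0 \<le> f x) \<longrightarrow> 0 \<le> \<mu> f"
    using assms(1) unfolding left_inv_mean_def by (elim conjE) assumption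
  hence "bounded_on (carrier G) f \<and> (\<forall>x\<in>carrier G. 0 \<le> f x) \<longrightarrow> 0 \<le> \<mu> f" by (elim allE)
  thus ?thesis using assms(2,3) by simp
qed

lemma mean_inv:
  assumes "left_inv_mean G \<mu>" "g \<in> carrier G" "bounded_on (carrier G) f"
  shows "\<mu> (\<lambda>x. f (inv\<^bsub>G\<^esub> g \<otimes>\<^bsub>G\<^esub> x)) = \<mu> f"
proof -
  have "\<forall>g\<in>carrier G. \<forall>f. bounded_on (carrier G) f \<longrightarrow>
        \<mu> (\<lambda>x. f (inv\<^bsub>G\<^esub> g \<otimes>\<^bsub>G\<^esub> x)) = \<mu> f"
    using assms(1) unfolding left_inv_mean_def by (elim conjE) assumption
  hence "\<forall>f. bounded_on (carrier G) f \<longrightarrow> \<mu> (\<lambda>x. f (inv\<^bsub>G\<^esub> g \<otimes>\<^bsub>G\<^esub> x)) = \<mu> f"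
    using assms(2) by (rule bspec)
  hence "bounded_on (carrier G) f \<longrightarrow> \<mu> (\<lambda>x. f (inv\<^bsub>G\<^esub> g \<otimes>\<^bsub>G\<^esub> x)) = \<mu> f" by (rule spec)
  thus ?thesis using assms(3) by (rule mp)
qed

lemma mean_zero: "left_inv_mean G \<mu> \<Longrightarrow> \<mu> (\<lambda>x. 0) = 0"
  using mean_scale[of G \<mu> "\<lambda>x. 1" 0] bounded_const[of "carrier G" 1] by simp

lemma mean_mono:
  assumes M: "left_inv_mean G \<mu>" and f: "bounded_on (carrier G) f" and g: "bounded_on (carrier G) g"
    and le: "\<And>x. x \<in> carrier G \<Longrightarrow> f x \<le> g x"
  shows "\<mu> f \<le> \<mu> g"
proof -
  have "\<mu> (\<lambda>x. g x - f x) \<ge> 0"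
    using mean_pos[OF M bounded_diff[OF f g]] le by auto
  moreover have "\<mu> (\<lambda>x. f x + (g x - f x)) = \<mu> f + \<mu> (\<lambda>x. g x - f x)"
    using mean_add[OF M f bounded_diff[OF f g]] .
  ultimately show ?thesis by simp
qed

lemma mean_sum:
  assumes M: "left_inv_mean G \<mu>" and fin: "finite A" and b: "\<And>a. a \<in> A \<Longrightarrow> bounded_on (carrier G) (f a)"
  shows "\<mu> (\<lambda>x. \<Sum>a\<in>A. f a x) = (\<Sum>a\<in>A. \<mu> (f a))"
  using fin b
proof (induction A rule: finite_induct)
  case empty then show ?case using mean_zero[OF M] by simp
next
  case (insert a A)
  have "\<mu> (\<lambda>x. \<Sum>b\<in>insert a A. f b x) = \<mu> (\<lambda>x. f a x + (\<Sum>b\<in>A. f b x))"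
    using insert by simp
  also have "\<dots> = \<mu> (f a) + \<mu> (\<lambda>x. \<Sum>b\<in>A. f b x)"
    using mean_add[OF M, of "f a" "\<lambda>x. \<Sum>b\<in>A. f b x"] insert bounded_sum[of A "carrier G" f]
    by simp
  finally show ?case using insert by simp
qed

lemma mean_subgroup:
  assumes G: "group G" and M: "left_inv_mean G \<mu>" and K: "subgroup K G" and fin: "finite (rcosets\<^bsub>G\<^esub> K)"
  shows "1 \<le> real (card (rcosets\<^bsub>G\<^esub> K)) * \<mu> (\<lambda>y. if y \<in> K then 1 else 0)"
proof -
  interpret G: group G by fact
  define R where "R = rcosets\<^bsub>G\<^esub> K"
  define rep where "rep c = (SOME a. a \<in> c)" for c :: "'a set"
  define \<psi> where "\<psi> = (\<lambda>y. if y \<in> K then (1::real) else 0)"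
  have Ks: "K \<subseteq> carrier G" using subgroup.subset[OF K] .
  have repc: "rep c \<in> c \<and> rep c \<in> carrier G" if "c \<in> R" for c
  proof -
    have "c \<in> (\<Union>a\<in>carrier G. {K #>\<^bsub>G\<^esub> a})" using that unfolding R_def RCOSETS_def .
    then obtain y where y: "y \<in> carrier G" "c = K #>\<^bsub>G\<^esub> y" by blast
    have "y \<in> c" using G.rcos_self[OF y(1) K] y by simp
    hence "rep c \<in> c" unfolding rep_def by (rule someI)
    thus ?thesis using G.r_coset_subset_G[OF Ks y(1)] y by auto
  qed
  have cover: "1 \<le> (\<Sum>c\<in>R. \<psi> (rep c \<otimes>\<^bsub>G\<^esub> y))" if y: "y \<in> carrier G" for y
  proof -
    define c0 where "c0 = K #>\<^bsub>G\<^esub> inv\<^bsub>G\<^esub> y"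
    have c0R: "c0 \<in> R" unfolding c0_def R_def using G.rcosetsI[OF Ks] y by auto
    then obtain k where k: "k \<in> K" "rep c0 = k \<otimes>\<^bsub>G\<^esub> inv\<^bsub>G\<^esub> y"
      using repc[OF c0R] unfolding c0_def r_coset_def by auto
    have "rep c0 \<otimes>\<^bsub>G\<^esub> y = k" using k y Ks by (simp add: G.m_assoc subsetD)
    hence "\<psi> (rep c0 \<otimes>\<^bsub>G\<^esub> y) = 1" using k unfolding \<psi>_def by simp
    moreover have "\<psi> (rep c0 \<otimes>\<^bsub>G\<^esub> y) \<le> (\<Sum>c\<in>R. \<psi> (rep c \<otimes>\<^bsub>G\<^esub> y))"
      by (rule member_le_sum) (use c0R fin R_def \<psi>_def in auto)
    ultimately show ?thesis by simp
  qed
  have bpsi: "bounded_on (carrier G) \<psi>" unfolding \<psi>_def by (rule bounded_ind)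
  have bsh: "bounded_on (carrier G) (\<lambda>y. \<psi> (rep c \<otimes>\<^bsub>G\<^esub> y))" for c
    unfolding \<psi>_def by (rule bounded_ind)
  have shift: "\<mu> (\<lambda>y. \<psi> (rep c \<otimes>\<^bsub>G\<^esub> y)) = \<mu> \<psi>" if c: "c \<in> R" for c
  proof -
    have rc: "rep c \<in> carrier G" using repc[OF c] by auto
    have "\<mu> (\<lambda>y. \<psi> (inv\<^bsub>G\<^esub> (inv\<^bsub>G\<^esub> (rep c)) \<otimes>\<^bsub>G\<^esub> y)) = \<mu> \<psi>"
      using mean_inv[OF M G.inv_closed[OF rc] bpsi] .
    thus ?thesis using rc by simp
  qed
  have "1 = \<mu> (\<lambda>y. 1)" using mean_one[OF M] by simp
  also have "\<dots> \<le> \<mu> (\<lambda>y. \<Sum>c\<in>R. \<psi> (rep c \<otimes>\<^bsub>G\<^esub> y))"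
    by (rule mean_mono[OF M bounded_const bounded_sum]) (use fin R_def bsh cover in auto)
  also have "\<dots> = (\<Sum>c\<in>R. \<mu> (\<lambda>y. \<psi> (rep c \<otimes>\<^bsub>G\<^esub> y)))"
    by (rule mean_sum[OF M]) (use fin R_def bsh in auto)
  also have "\<dots> = (\<Sum>c\<in>R. \<mu> \<psi>)" using shift by simp
  also have "\<dots> = real (card R) * \<mu> \<psi>" by simp
  finally show ?thesis unfolding R_def \<psi>_def .
qed


lemma part1:
  assumes G: "group G" and S: "subgroup \<Gamma> G" and cm: "card (rcosets\<^bsub>G\<^esub> \<Gamma>) = m" and m1: "m \<ge> 1"
    and N: "H \<lhd> G\<lparr>carrier := \<Gamma>\<rparr>" and finH: "finite H" and cd: "card H = d"
    and C: "comm_group (G\<lparr>carrier := \<Gamma>\<rparr> Mod H)" and M: "left_inv_mean G \<mu>"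
  shows "dc_mean G \<mu> \<ge> 1 / (real m ^ 2 * real d)"
proof -
  interpret G: group G by fact
  have finR: "finite (rcosets\<^bsub>G\<^esub> \<Gamma>)" using cm m1 card.infinite by fastforce
  have "\<one>\<^bsub>G\<^esub> \<in> H" using subgroup.one_closed[OF normal.axioms(1)[OF N]] by simp
  hence d1: "d \<ge> 1" using finH cd by (metis One_nat_def Suc_leI card_gt_0_iff empty_iff)
  define F where "F x = \<mu> (\<lambda>y. if x \<otimes>\<^bsub>G\<^esub> y = y \<otimes>\<^bsub>G\<^esub> x then 1 else 0)" for x
  have one: "\<mu> (\<lambda>y. 1) = 1" using mean_one[OF M] by simp
  have F01: "0 \<le> F x \<and> F x \<le> 1" for x
  proof -
    have "\<mu> (\<lambda>y. 0) \<le> F x" unfolding F_def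
      by (rule mean_mono[OF M bounded_const bounded_ind]) auto
    moreover have "F x \<le> \<mu> (\<lambda>y. 1)" unfolding F_def
      by (rule mean_mono[OF M bounded_ind bounded_const]) auto
    ultimately show ?thesis using mean_zero[OF M] one by simp
  qed
  have bF: "bounded_on (carrier G) F" unfolding bounded_on_def
    by (rule exI[of _ 1]) (use F01 in auto)
  have Fx: "F x \<ge> 1 / (real m * real d)" if x: "x \<in> \<Gamma>" for x
  proof -
    define K where "K = {y\<in>\<Gamma>. x \<otimes>\<^bsub>G\<^esub> y = y \<otimes>\<^bsub>G\<^esub> x}"
    have xc: "x \<in> carrier G" using x subgroup.subset[OF S] by auto
    have KS: "subgroup K G" unfolding K_def using cent_subgroup[OF G S xc] .
    have ci: "finite (rcosets\<^bsub>G\<^esub> K)" "card (rcosets\<^bsub>G\<^esub> K) \<le> m * d"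
      using cent_index[OF G S N C finH finR x] cm cd unfolding K_def by auto
    have "1 \<le> real (card (rcosets\<^bsub>G\<^esub> K)) * \<mu> (\<lambda>y. if y \<in> K then 1 else 0)"
      using mean_subgroup[OF G M KS ci(1)] .
    moreover have "\<mu> (\<lambda>y. if y \<in> K then 1 else 0) \<le> F x" unfolding F_def
      by (rule mean_mono[OF M bounded_ind bounded_ind]) (auto simp: K_def)
    moreover have "real (card (rcosets\<^bsub>G\<^esub> K)) \<le> real m * real d" using ci(2) by (metis of_nat_le_iff of_nat_mult)
    ultimately have "1 \<le> real m * real d * F x"
      using mult_left_mono[of "\<mu> (\<lambda>y. if y \<in> K then 1 else 0)" "F x" "real (card (rcosets\<^bsub>G\<^esub> K))"]
        mult_right_mono[of "real (card (rcosets\<^bsub>G\<^esub> K))" "real m * real d" "F x"] F01[of x]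
      by linarith
    moreover have "real m * real d > 0" using m1 d1 by simp
    ultimately show ?thesis by (simp add: divide_simps mult.commute)
  qed
  have mG: "1 \<le> real m * \<mu> (\<lambda>y. if y \<in> \<Gamma> then 1 else 0)"
    using mean_subgroup[OF G M S finR] cm by simp
  have "\<mu> (\<lambda>x. (1 / (real m * real d)) * (if x \<in> \<Gamma> then 1 else 0)) \<le> \<mu> F"
    by (rule mean_mono[OF M _ bF]) (use Fx F01 bounded_ind mean_scale in \<open>auto simp: bounded_on_def\<close>)
  hence "(1 / (real m * real d)) * \<mu> (\<lambda>x. if x \<in> \<Gamma> then 1 else 0) \<le> \<mu> F"
    using mean_scale[OF M bounded_ind] by metis
  moreover have "1 / (real m ^ 2 * real d) \<le> (1 / (real m * real d)) * \<mu> (\<lambda>x. if x \<in> \<Gamma> then 1 else 0)"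
  proof -
    have "1 / real m \<le> \<mu> (\<lambda>x. if x \<in> \<Gamma> then 1 else 0)" using mG m1 by (simp add: divide_simps mult.commute)
    hence "(1 / (real m * real d)) * (1 / real m) \<le> (1 / (real m * real d)) * \<mu> (\<lambda>x. if x \<in> \<Gamma> then 1 else 0)"
      by (rule mult_left_mono) simp
    thus ?thesis by (simp add: power2_eq_square mult.commute mult.left_commute)
  qed
  moreover have "dc_mean G \<mu> = \<mu> F" unfolding dc_mean_def F_def ..
  ultimately show ?thesis by linarith
qed


lemma pmf_bound:
  assumes h: "\<And>x. x \<in> A \<Longrightarrow> c \<le> measure_pmf.prob p {y. P x y}" and c: "c \<ge> 0"
  shows "c * measure_pmf.prob p A \<le> measure_pmf.prob (pair_pmf p p) {(x, y). P x y}"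
proof -
  let ?S = "{(x, y). P x y}"
  have "ennreal (c * measure_pmf.prob p A) = (\<integral>\<^sup>+x. ennreal c * indicator A x \<partial>p)"
    by (simp add: nn_integral_cmult_indicator measure_pmf.emeasure_eq_measure ennreal_mult c)
  also have "\<dots> \<le> (\<integral>\<^sup>+x. \<integral>\<^sup>+y. indicator ?S (x, y) \<partial>p \<partial>p)"
  proof (rule nn_integral_mono)
    fix x
    have eq: "(\<integral>\<^sup>+y. indicator ?S (x, y) \<partial>p) = ennreal (measure_pmf.prob p {y. P x y})"
    proof -
      have "(\<integral>\<^sup>+y. indicator ?S (x, y) \<partial>p) = (\<integral>\<^sup>+y. indicator {y. P x y} y \<partial>p)"
        by (rule nn_integral_cong) (simp add: indicator_def)
      also have "\<dots> = emeasure p {y. P x y}" by simp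
      finally show ?thesis by (simp add: measure_pmf.emeasure_eq_measure)
    qed
    show "ennreal c * indicator A x \<le> (\<integral>\<^sup>+y. indicator ?S (x, y) \<partial>p)"
      unfolding eq using h by (cases "x \<in> A") auto
  qed
  also have "\<dots> = (\<integral>\<^sup>+z. indicator ?S z \<partial>pair_pmf p p)"
    by (rule nn_integral_pair_pmf'[symmetric])
  also have "\<dots> = ennreal (measure_pmf.prob (pair_pmf p p) ?S)"
    by (simp add: measure_pmf.emeasure_eq_measure)
  finally show ?thesis by (simp add: ennreal_le_iff)
qed


lemma part2:
  assumes G: "group G" and S: "subgroup \<Gamma> G" and cm: "card (rcosets\<^bsub>G\<^esub> \<Gamma>) = m" and m1: "m \<ge> 1"
    and N: "H \<lhd> G\<lparr>carrier := \<Gamma>\<rparr>" and finH: "finite H" and cd: "card H = d"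
    and C: "comm_group (G\<lparr>carrier := \<Gamma>\<rparr> Mod H)" and MI: "measures_index_uniformly G M"
  shows "dc_seq G M \<ge> ereal (1 / (real m ^ 2 * real d))"
proof -
  interpret G: group G by fact
  have finR: "finite (rcosets\<^bsub>G\<^esub> \<Gamma>)" using cm m1 card.infinite by fastforce
  have "\<one>\<^bsub>G\<^esub> \<in> H" using subgroup.one_closed[OF normal.axioms(1)[OF N]] by simp
  hence d1: "d \<ge> 1" using finH cd by (metis One_nat_def Suc_leI card_gt_0_iff empty_iff)
  define a where "a = 1 / real m"
  define b where "b = 1 / (real m * real d)"
  have a01: "0 < a" "a \<le> 1" using m1 unfolding a_def by auto
  have md1: "1 \<le> real m * real d"
    using mult_mono[of 1 "real m" 1 "real d"] m1 d1 by simp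
  have b01: "0 < b" "b \<le> 1" using md1 unfolding b_def by auto
  have key: "ereal ((a - e) * (b - e)) \<le> dc_seq G M" if e: "0 < e" "e \<le> b" for e
  proof -
    have "\<forall>\<epsilon>>0. \<exists>N. \<forall>n\<ge>N. \<forall>H. subgroup H G \<longrightarrow> (\<forall>x\<in>carrier G.
        \<bar>measure_pmf.prob (M n) (x <#\<^bsub>G\<^esub> H) - inverse (real (group_index G H))\<bar> < \<epsilon>)"
      using MI unfolding measures_index_uniformly_def by (rule conjunct2)
    from this[rule_format, OF e(1)] obtain N0 where hN: "\<forall>n\<ge>N0. \<forall>K. subgroup K G \<longrightarrow> (\<forall>x\<in>carrier G.
        \<bar>measure_pmf.prob (M n) (x <#\<^bsub>G\<^esub> K) - inverse (real (group_index G K))\<bar> < e)"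
      by (elim exE)
    have "eventually (\<lambda>n. (a - e) * (b - e) \<le> dc_pmf G (M n)) sequentially"
      unfolding eventually_sequentially
    proof (intro exI allI impI)
      fix n assume n: "N0 \<le> n"
      have pr: "inverse (real (group_index G K)) - e < measure_pmf.prob (M n) K" if K: "subgroup K G" for K
      proof -
        have one: "\<one>\<^bsub>G\<^esub> <#\<^bsub>G\<^esub> K = K" using G.lcos_mult_one[OF subgroup.subset[OF K]] .
        have "\<bar>measure_pmf.prob (M n) (\<one>\<^bsub>G\<^esub> <#\<^bsub>G\<^esub> K) - inverse (real (group_index G K))\<bar> < e"
          using hN[rule_format, OF n K G.one_closed] .
        hence "\<bar>measure_pmf.prob (M n) K - inverse (real (group_index G K))\<bar> < e" unfolding one .
        thus ?thesis unfolding abs_less_iff by linarith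
      qed
      have pG: "a - e \<le> measure_pmf.prob (M n) \<Gamma>"
        using pr[OF S] cm unfolding group_index_def a_def by (simp add: inverse_eq_divide)
      have pC: "b - e \<le> measure_pmf.prob (M n) {y. x \<otimes>\<^bsub>G\<^esub> y = y \<otimes>\<^bsub>G\<^esub> x}" if x: "x \<in> \<Gamma>" for x
      proof -
        define K where "K = {y\<in>\<Gamma>. x \<otimes>\<^bsub>G\<^esub> y = y \<otimes>\<^bsub>G\<^esub> x}"
        have xc: "x \<in> carrier G" using x subgroup.subset[OF S] by auto
        have KS: "subgroup K G" unfolding K_def using cent_subgroup[OF G S xc] .
        have ci: "finite (rcosets\<^bsub>G\<^esub> K)" "card (rcosets\<^bsub>G\<^esub> K) \<le> m * d"
          using cent_index[OF G S N C finH finR x] cm cd unfolding K_def by auto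
        have "K #>\<^bsub>G\<^esub> \<one>\<^bsub>G\<^esub> \<in> rcosets\<^bsub>G\<^esub> K" using G.rcosetsI[OF subgroup.subset[OF KS]] by simp
        hence c0: "card (rcosets\<^bsub>G\<^esub> K) > 0" using ci(1) card_gt_0_iff by blast
        have s1: "b \<le> inverse (real (card (rcosets\<^bsub>G\<^esub> K)))"
        proof -
          have cr: "real (card (rcosets\<^bsub>G\<^esub> K)) \<le> real m * real d"
            using ci(2) by (metis of_nat_le_iff of_nat_mult)
          show ?thesis unfolding b_def
            using frac_le[of 1 1 "real (card (rcosets\<^bsub>G\<^esub> K))" "real m * real d"] c0 cr
            by (simp add: inverse_eq_divide)
        qed
        have s2: "inverse (real (card (rcosets\<^bsub>G\<^esub> K))) - e < measure_pmf.prob (M n) K"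
          using pr[OF KS] unfolding group_index_def .
        have s3: "measure_pmf.prob (M n) K \<le> measure_pmf.prob (M n) {y. x \<otimes>\<^bsub>G\<^esub> y = y \<otimes>\<^bsub>G\<^esub> x}"
          by (rule measure_pmf.finite_measure_mono) (auto simp: K_def)
        show ?thesis using s1 s2 s3 by linarith
      qed
      have "(b - e) * measure_pmf.prob (M n) \<Gamma> \<le> dc_pmf G (M n)"
        unfolding dc_pmf_def using pmf_bound[of \<Gamma> "b - e" "M n" "\<lambda>x y. x \<otimes>\<^bsub>G\<^esub> y = y \<otimes>\<^bsub>G\<^esub> x"] pC e
        by simp
      moreover have "(b - e) * (a - e) \<le> (b - e) * measure_pmf.prob (M n) \<Gamma>"
        using pG e by (intro mult_left_mono) auto
      ultimately show "(a - e) * (b - e) \<le> dc_pmf G (M n)" by (simp add: mult.commute)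
    qed
    hence ev: "eventually (\<lambda>n. ereal ((a - e) * (b - e)) \<le> ereal (dc_pmf G (M n))) sequentially"
      by (rule eventually_mono) simp
    have "ereal ((a - e) * (b - e)) \<le> Limsup sequentially (\<lambda>n. ereal (dc_pmf G (M n)))"
      using le_Limsup[OF trivial_limit_sequentially ev] .
    thus ?thesis unfolding dc_seq_def .
  qed
  have ab: "a * b = 1 / (real m ^ 2 * real d)" unfolding a_def b_def by (simp add: power2_eq_square)
  show ?thesis unfolding ab[symmetric]
  proof (rule ereal_le_epsilon2)
    fix \<delta> :: real assume \<delta>: "0 < \<delta>"
    define e where "e = min b (\<delta> / 2)"
    have e: "0 < e" "e \<le> b" "e \<le> \<delta> / 2" using \<delta> b01 unfolding e_def by auto
    have "e * (a + b) \<le> e * 2" using e a01 b01 by (intro mult_left_mono) auto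
    moreover have "(a - e) * (b - e) = a * b - e * (a + b) + e * e" by (simp add: algebra_simps)
    moreover have "e * e \<ge> 0" by simp
    ultimately have "a * b \<le> (a - e) * (b - e) + \<delta>" using e by linarith
    hence "ereal (a * b) \<le> ereal ((a - e) * (b - e)) + ereal \<delta>" by simp
    also have "\<dots> \<le> dc_seq G M + ereal \<delta>" using key[OF e(1,2)] by (rule add_right_mono)
    finally show "ereal (a * b) \<le> dc_seq G M + ereal \<delta>" .
  qed
qed

theorem proposition1p17:
  fixes G :: "('a, 'b) monoid_scheme" and \<Gamma> H :: "'a set" and m d :: nat
  assumes "group G"
    and "countable (carrier G)"
    and "subgroup \<Gamma> G"
    and "group_index G \<Gamma> = m" and "m \<ge> 1"
    and "H \<lhd> G\<lparr>carrier := \<Gamma>\<rparr>"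
    and "finite H" and "card H = d"
    and "comm_group (G\<lparr>carrier := \<Gamma>\<rparr> Mod H)"
  shows "(\<forall>\<mu>. left_inv_mean G \<mu> \<longrightarrow> dc_mean G \<mu> \<ge> 1 / (real m ^ 2 * real d))
       \<and> (finitely_generated_group G \<longrightarrow>
           (\<forall>M. measures_index_uniformly G M \<longrightarrow>
              dc_seq G M \<ge> ereal (1 / (real m ^ 2 * real d))))"
  proof
  have cm: "card (rcosets\<^bsub>G\<^esub> \<Gamma>) = m" using assms(4) unfolding group_index_def .
  show "\<forall>\<mu>. left_inv_mean G \<mu> \<longrightarrow> dc_mean G \<mu> \<ge> 1 / (real m ^ 2 * real d)"
    using part1[OF assms(1) assms(3) cm assms(5) assms(6) assms(7) assms(8) assms(9)] by blast
  show "finitely_generated_group G \<longrightarrow>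
           (\<forall>M. measures_index_uniformly G M \<longrightarrow>
              dc_seq G M \<ge> ereal (1 / (real m ^ 2 * real d)))"
    using part2[OF assms(1) assms(3) cm assms(5) assms(6) assms(7) assms(8) assms(9)] by blast
qed

end
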